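(* Let $\omega$ be a non-principal ultrafilter and $d=(d_n)$ a scaling sequence with $\lim_\omega d_n=\infty$. The inclusion $i:K_2\to G$ induces a bi-Lipschitz embedding $\hat{i}:Con^\omega(K_2,d)\hookrightarrow Con^\omega(G,d)$.
   Context: $G=F_2(a,b)*_{K(a,b)=K(x,y)}F_2(x,y)$ with word metric for $\{a^{\pm1},b^{\pm1},x^{\pm1},y^{\pm1}\}$, where $F_2(a,b)$, $F_2(x,y)$ are copies of the free group of rank 2 and $K(x,y)$ is the image of $K(a,b)$ under $a\mapsto x,b\mapsto y$. $K=\bigcup_nK_n$ with ($|h|$ word length, $(h,k)_1$ Gromov product at $1$, $(h,H)_1=\max_{k\in H}(h,k)_1$, $T(n)$ the tower of $2$'s of height $n$, $U(n)(a,b)=[a^{T(n)+1}b^{T(n)+1}]\cdots[a^{T(n+1)}b^{T(n+1)}]$): $K_1=\langle g_1\rangle$, $g_1$ not a proper power; $K_{n+1}=\langle K_n,g_{n+1}\rangle$ where $g_{n+1}\in F_2\setminus K_n$ is cyclically reduced, no proper power of $a$ or $b$ lies in $K_n$, $(g_{n+1},K_n)_1=\min_{h\in F_2\setminus K_n}(h,K_n)_1$, and $g_{n+1}=h_{n+1}c_{n+1}U(N(n))d_{n+1}$ with $h_{n+1}$ an initial segment of a geodesic ray $r$ from $1$ minimizing $(r,K_n)_1$, $(h_{n+1},K_n)_1$ equal to that minimum, $|h_{n+1}|=(h_{n+1},K_n)_1+1$; $N(n)$ at least twice the maximal $m$ with $a^m$ or $b^m$ a subword of a freely reduced word of $K_n$,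 and $N(n)>|h_{n+1}|$; $c_{n+1},d_{n+1}\in\{a^{\pm1},b^{\pm1}\}$ making $g_{n+1}$ cyclically reduced. $K_2=\langle g_1,g_2\rangle\subset F_2(a,b)\subset G$ is a free group of rank 2, with a word metric for a finite generating set. Asymptotic cones are ultralimits of the metrics scaled by $1/d_n$, based at the identity. *)

theory Defs
  imports Complex_Main "HOL-Library.Extended_Nat"
begin

text \<open>A letter (i, False) is the generator number i, (i, True) its inverse.
  Generators: a = 0, b = 1, x = 2, y = 3.\<close>

type_synonym letter = "nat \<times> bool"
type_synonym word = "letter list"

definition inv_letter :: "letter \<Rightarrow> letter" where
  "inv_letter l = (fst l, \<not> snd l)"

fun reduce :: "word \<Rightarrow> word" where
  "reduce [] = []"
| "reduce (l # w) = (case reduce w of [] \<Rightarrow> [l]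
      | m # v \<Rightarrow> (if m = inv_letter l then v else l # m # v))"

definition reduced :: "word \<Rightarrow> bool" where
  "reduced w \<longleftrightarrow> (\<forall>i. Suc i < length w \<longrightarrow> w ! Suc i \<noteq> inv_letter (w ! i))"

definition cyc_reduced :: "word \<Rightarrow> bool" where
  "cyc_reduced w \<longleftrightarrow> reduced w \<and> (w \<noteq> [] \<longrightarrow> last w \<noteq> inv_letter (hd w))"

definition winv :: "word \<Rightarrow> word" where
  "winv w = rev (map inv_letter w)"

definition fmul :: "word \<Rightarrow> word \<Rightarrow> word" where
  "fmul u v = reduce (u @ v)"

fun fpow :: "word \<Rightarrow> nat \<Rightarrow> word" where
  "fpow u 0 = []"
| "fpow u (Suc m) = fmul u (fpow u m)"

definition FG :: "nat \<Rightarrow> word set" where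
  "FG k = {w. reduced w \<and> (\<forall>l \<in> set w. fst l < k)}"

abbreviation F2 :: "word set" where "F2 \<equiv> FG 2"
abbreviation F4 :: "word set" where "F4 \<equiv> FG 4"

definition gen_a :: letter where "gen_a = (0, False)"
definition gen_b :: letter where "gen_b = (1, False)"

inductive_set gen_sub :: "word set \<Rightarrow> word set" for S where
  one: "[] \<in> gen_sub S"
| gen: "s \<in> S \<Longrightarrow> s \<in> gen_sub S"
| mul: "u \<in> gen_sub S \<Longrightarrow> v \<in> gen_sub S \<Longrightarrow> fmul u v \<in> gen_sub S"
| inv: "u \<in> gen_sub S \<Longrightarrow> winv u \<in> gen_sub S"

inductive_set ncl4 :: "word set \<Rightarrow> word set" for R where
  one: "[] \<in> ncl4 R"
| rel: "r \<in> R \<Longrightarrow> r \<in> ncl4 R"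
| mul: "u \<in> ncl4 R \<Longrightarrow> v \<in> ncl4 R \<Longrightarrow> fmul u v \<in> ncl4 R"
| inv: "u \<in> ncl4 R \<Longrightarrow> winv u \<in> ncl4 R"
| conj: "u \<in> ncl4 R \<Longrightarrow> g \<in> F4 \<Longrightarrow> fmul (fmul g u) (winv g) \<in> ncl4 R"

definition proper_power :: "word \<Rightarrow> bool" where
  "proper_power g \<longleftrightarrow> (\<exists>u m. u \<in> F2 \<and> m \<ge> 2 \<and> g = fpow u m)"

definition has_power_subword :: "letter \<Rightarrow> nat \<Rightarrow> word \<Rightarrow> bool" where
  "has_power_subword l m w \<longleftrightarrow> (\<exists>p s. w = p @ replicate m l @ s)"

definition gprod :: "word \<Rightarrow> word \<Rightarrow> nat" where
  "gprod h k = (length h + length k - length (fmul (winv h) k)) div 2"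

definition gprod_set :: "word \<Rightarrow> word set \<Rightarrow> nat" where
  "gprod_set h H = Max ((\<lambda>k. gprod h k) ` H)"

definition geod_ray :: "(nat \<Rightarrow> letter) \<Rightarrow> bool" where
  "geod_ray r \<longleftrightarrow> (\<forall>t. fst (r t) < 2 \<and> r (Suc t) \<noteq> inv_letter (r t))"

definition ray_prefix :: "(nat \<Rightarrow> letter) \<Rightarrow> nat \<Rightarrow> word" where
  "ray_prefix r t = map r [0..<t]"

definition ray_gprod_set :: "(nat \<Rightarrow> letter) \<Rightarrow> word set \<Rightarrow> enat" where
  "ray_gprod_set r H = (SUP t. enat (gprod_set (ray_prefix r t) H))"

fun tower :: "nat \<Rightarrow> nat" where
  "tower 0 = 1"
| "tower (Suc n) = 2 ^ tower n"

definition Uword :: "nat \<Rightarrow> word" where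
  "Uword n = concat (map (\<lambda>k. replicate k gen_a @ replicate k gen_b)
                         [Suc (tower n) ..< Suc (tower (Suc n))])"

definition Kn :: "(nat \<Rightarrow> word) \<Rightarrow> nat \<Rightarrow> word set" where
  "Kn g n = gen_sub (g ` {1..n})"

definition Kall :: "(nat \<Rightarrow> word) \<Rightarrow> word set" where
  "Kall g = (\<Union>n\<in>{1..}. Kn g n)"

definition to_xy :: "word \<Rightarrow> word" where
  "to_xy w = map (\<lambda>l. (fst l + 2, snd l)) w"

text \<open>G = F(a,b,x,y) / N with N the normal closure of {k(a,b) k(x,y)^-1 : k in K}.\<close>
definition amalg_rel :: "(nat \<Rightarrow> word) \<Rightarrow> word set" where
  "amalg_rel g = ncl4 ((\<lambda>k. fmul k (winv (to_xy k))) ` Kall g)"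

text \<open>Word length in G (generators a,b,x,y and inverses) of the image of w.\<close>
definition wlG :: "(nat \<Rightarrow> word) \<Rightarrow> word \<Rightarrow> nat" where
  "wlG g w = (LEAST n. \<exists>v. length v = n \<and> (\<forall>l\<in>set v. fst l < 4)
                 \<and> fmul (winv w) (reduce v) \<in> amalg_rel g)"

definition distG :: "(nat \<Rightarrow> word) \<Rightarrow> word \<Rightarrow> word \<Rightarrow> nat" where
  "distG g u v = wlG g (fmul (winv u) v)"

definition wlS :: "word set \<Rightarrow> word \<Rightarrow> nat" where
  "wlS S k = (LEAST n. \<exists>ws. length ws = n \<and> set ws \<subseteq> S \<union> winv ` S
                 \<and> foldr fmul ws [] = k)"

definition distS :: "word set \<Rightarrow> word \<Rightarrow> word \<Rightarrow> nat" where
  "distS S u v = wlS S (fmul (winv u) v)"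

definition nonprincipal_ultrafilter :: "nat filter \<Rightarrow> bool" where
  "nonprincipal_ultrafilter F \<longleftrightarrow> F \<noteq> bot
     \<and> (\<forall>P. eventually P F \<or> eventually (\<lambda>n. \<not> P n) F)
     \<and> (\<forall>m. eventually (\<lambda>n. n \<noteq> m) F)"

text \<open>Ultralimit (exists and is unique for F-bounded real sequences).\<close>
definition ulim :: "nat filter \<Rightarrow> (nat \<Rightarrow> real) \<Rightarrow> real" where
  "ulim F f = Lim F f"

text \<open>A sequence of points, given by their distances to the base point 1,
  defines a point of the asymptotic cone iff these distances are O(d_n) F-a.s.\<close>
definition cone_admissible :: "nat filter \<Rightarrow> (nat \<Rightarrow> real) \<Rightarrow> (nat \<Rightarrow> real) \<Rightarrow> bool" where
  "cone_admissible F d f \<longleftrightarrow> (\<exists>C. eventually (\<lambda>n. f n \<le> C * d n) F)"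

end

theory Submission imports Defs "HOL-Analysis.Elementary_Topology" begin

definition rstep :: "letter \<Rightarrow> word \<Rightarrow> word" where
  "rstep l x = (case x of [] \<Rightarrow> [l] | m # v \<Rightarrow> (if m = inv_letter l then v else l # m # v))"

lemma reduce_Cons: "reduce (l # w) = rstep l (reduce w)"
  by (simp add: rstep_def)

declare reduce.simps(2)[simp del]

lemma inv_inv[simp]: "inv_letter (inv_letter l) = l"
  by (simp add: inv_letter_def)

lemma inv_neq[simp]: "inv_letter l \<noteq> l" "l \<noteq> inv_letter l"
  by (auto simp: inv_letter_def prod_eq_iff)

lemma inv_eq_iff: "inv_letter a = b \<longleftrightarrow> a = inv_letter b"
  by auto

lemma reduced_Nil[simp]: "reduced []" by (simp add: reduced_def)

lemma reduced_Cons: "reduced (l # w) \<longleftrightarrow> reduced w \<and> (w \<noteq> [] \<longrightarrow> hd w \<noteq> inv_letter l)"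
proof
  assume a: "reduced (l # w)"
  have "reduced w" unfolding reduced_def
  proof (intro allI impI)
    fix i assume "Suc i < length w"
    with a[unfolded reduced_def, rule_format, of "Suc i"] show "w ! Suc i \<noteq> inv_letter (w ! i)" by simp
  qed
  moreover have "w \<noteq> [] \<longrightarrow> hd w \<noteq> inv_letter l"
    using a[unfolded reduced_def, rule_format, of 0] by (cases w) auto
  ultimately show "reduced w \<and> (w \<noteq> [] \<longrightarrow> hd w \<noteq> inv_letter l)" by blast
next
  assume a: "reduced w \<and> (w \<noteq> [] \<longrightarrow> hd w \<noteq> inv_letter l)"
  show "reduced (l # w)" unfolding reduced_def
  proof (intro allI impI)
    fix i assume i: "Suc i < length (l # w)"
    show "(l # w) ! Suc i \<noteq> inv_letter ((l # w) ! i)"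
    proof (cases i)
      case 0 then show ?thesis using a i by (cases w) auto
    next
      case (Suc j) then show ?thesis using a i by (auto simp: reduced_def)
    qed
  qed
qed

lemma reduced_rstep: "reduced x \<Longrightarrow> reduced (rstep l x)"
  by (auto simp: rstep_def reduced_Cons split: list.splits)

lemma reduced_reduce: "reduced (reduce w)"
  by (induction w) (auto simp: reduce_Cons reduced_rstep)

lemma reduce_id: "reduced w \<Longrightarrow> reduce w = w"
  by (induction w) (auto simp: reduce_Cons rstep_def reduced_Cons split: list.splits)

lemma reduce_reduce[simp]: "reduce (reduce w) = reduce w"
  by (rule reduce_id[OF reduced_reduce])

lemma rstep_cancel: "reduced y \<Longrightarrow> rstep l (rstep (inv_letter l) y) = y"
  by (auto simp: rstep_def reduced_Cons split: list.splits)

lemma reduce_append_right: "reduce (u @ v) = reduce (u @ reduce v)"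
  by (induction u) (auto simp: reduce_Cons)

lemma reduce_rstep_append: "reduce (rstep l x @ v) = rstep l (reduce (x @ v))"
proof (cases x)
  case Nil then show ?thesis by (simp add: rstep_def reduce_Cons)
next
  case (Cons m x')
  show ?thesis
  proof (cases "m = inv_letter l")
    case True
    have "rstep l (reduce (x @ v)) = rstep l (rstep (inv_letter l) (reduce (x' @ v)))"
      using Cons True by (simp add: reduce_Cons)
    also have "\<dots> = reduce (x' @ v)" by (rule rstep_cancel[OF reduced_reduce])
    finally show ?thesis using Cons True by (simp add: rstep_def)
  next
    case False then show ?thesis using Cons by (simp add: rstep_def reduce_Cons)
  qed
qed

lemma reduce_append_left: "reduce (u @ v) = reduce (reduce u @ v)"
  by (induction u) (auto simp: reduce_Cons reduce_rstep_append)

lemma reduce_append_both: "reduce (u @ v) = reduce (reduce u @ reduce v)"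
  by (metis reduce_append_left reduce_append_right)

lemma reduce_assoc3: "reduce (u @ v @ w) = reduce (reduce (u @ v) @ w)"
  by (metis append.assoc reduce_append_left)

lemma length_rstep: "length (rstep l x) \<le> Suc (length x)"
  by (auto simp: rstep_def split: list.splits)

lemma length_reduce: "length (reduce w) \<le> length w"
  by (induction w) (auto simp: reduce_Cons intro: order_trans[OF length_rstep])

lemma set_rstep: "set (rstep l x) \<subseteq> insert l (set x)"
  by (auto simp: rstep_def split: list.splits)

lemma set_reduce: "set (reduce w) \<subseteq> set w"
  by (induction w) (use set_rstep in \<open>fastforce simp: reduce_Cons\<close>)+

lemma winv_Cons: "winv (l # w) = winv w @ [inv_letter l]"
  by (simp add: winv_def)

lemma winv_winv[simp]: "winv (winv w) = w"
  by (simp add: winv_def rev_map comp_def)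

lemma length_winv[simp]: "length (winv w) = length w"
  by (simp add: winv_def)

lemma set_winv: "set (winv w) = inv_letter ` set w"
  by (simp add: winv_def)

lemma winv_append: "winv (u @ v) = winv v @ winv u"
  by (simp add: winv_def)

lemma winv_Nil[simp]: "winv [] = []" by (simp add: winv_def)

lemma reduce_inv_cancel2: "reduce (inv_letter l # l # w) = reduce w"
  using rstep_cancel[OF reduced_reduce, of "inv_letter l"] by (simp add: reduce_Cons)

lemma reduce_winv_self: "reduce (winv w @ w) = []"
proof (induction w)
  case Nil then show ?case by simp
next
  case (Cons l w)
  have "reduce (winv (l # w) @ l # w) = reduce (winv w @ (inv_letter l # l # w))"
    by (simp add: winv_Cons)
  also have "\<dots> = reduce (winv w @ reduce (inv_letter l # l # w))"
    by (rule reduce_append_right)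
  also have "\<dots> = reduce (winv w @ reduce w)"
    by (simp only: reduce_inv_cancel2)
  also have "\<dots> = reduce (winv w @ w)"
    by (rule reduce_append_right[symmetric])
  finally show ?case using Cons by simp
qed

lemma reduce_self_winv: "reduce (w @ winv w) = []"
  using reduce_winv_self[of "winv w"] by simp

lemma reduced_winv: "reduced w \<Longrightarrow> reduced (winv w)"
proof (induction w)
  case Nil then show ?case by simp
next
  case (Cons l w)
  have "reduced (winv w)" using Cons by (simp add: reduced_Cons)
  show ?case unfolding reduced_def winv_Cons
  proof (intro allI impI)
    fix i assume i: "Suc i < length (winv w @ [inv_letter l])"
    show "(winv w @ [inv_letter l]) ! Suc i \<noteq> inv_letter ((winv w @ [inv_letter l]) ! i)"
    proof (cases "Suc i < length w")
      case True then show ?thesis using \<open>reduced (winv w)\<close>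
        by (auto simp: nth_append reduced_def)
    next
      case False
      then have si: "Suc i = length w" using i by simp
      then have "w \<noteq> []" by auto
      have "winv w ! i = inv_letter (hd w)"
        using si \<open>w \<noteq> []\<close> by (simp add: winv_def rev_nth hd_conv_nth)
      then show ?thesis using si Cons.prems \<open>w \<noteq> []\<close>
        by (auto simp: nth_append reduced_Cons)
    qed
  qed
qed

lemma reduce_winv: "reduce (winv w) = winv (reduce w)"
proof -
  have "reduce (winv w) = reduce (winv w @ reduce (w @ winv (reduce w)))"
    by (metis append_Nil2 reduce_append_left reduce_self_winv)
  also have "\<dots> = reduce (reduce (winv w @ w) @ winv (reduce w))"
    by (metis reduce_append_right reduce_assoc3)
  also have "\<dots> = winv (reduce w)"
    by (simp add: reduce_winv_self reduce_id reduced_winv reduced_reduce)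
  finally show ?thesis .
qed


lemma reduce_Nil[simp]: "reduce [] = []" by simp

lemma fmul_red: "fmul u v = reduce (u @ v)" by (simp add: fmul_def)

lemma FG_reduce: "set w \<subseteq> {l. fst l < k} \<Longrightarrow> reduce w \<in> FG k"
  using set_reduce[of w] by (auto simp: FG_def reduced_reduce)

lemma FG_fmul: "u \<in> FG k \<Longrightarrow> v \<in> FG k \<Longrightarrow> fmul u v \<in> FG k"
  unfolding fmul_red by (rule FG_reduce) (auto simp: FG_def)

lemma FG_winv: "u \<in> FG k \<Longrightarrow> winv u \<in> FG k"
  by (auto simp: FG_def reduced_winv set_winv inv_letter_def)

lemma gen_sub_FG: "X \<subseteq> FG k \<Longrightarrow> gen_sub X \<subseteq> FG k"
proof
  fix u assume X: "X \<subseteq> FG k" and "u \<in> gen_sub X"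
  from this(2) show "u \<in> FG k" using X
    by (induction rule: gen_sub.induct) (auto intro: FG_fmul FG_winv, simp add: FG_def reduced_def)
qed

lemma foldr_fmul: "foldr fmul ws [] = reduce (concat ws)"
proof (induction ws)
  case (Cons w ws) then show ?case by (simp add: fmul_red reduce_append_right[of w "concat ws", symmetric])
qed simp

lemma concat_in_gen_sub:
  "set ws \<subseteq> X \<union> winv ` X \<Longrightarrow> reduce (concat ws) \<in> gen_sub X"
proof (induction ws)
  case Nil then show ?case by (simp add: gen_sub.one)
next
  case (Cons w ws)
  have w: "w \<in> gen_sub X" using Cons.prems by (auto intro: gen_sub.gen gen_sub.inv)
  have "reduce (concat (w # ws)) = fmul w (reduce (concat ws))"
    by (simp add: fmul_red reduce_append_right[of w "concat ws", symmetric])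
  then show ?case using Cons w by (auto intro: gen_sub.mul)
qed

lemma gen_sub_concat:
  assumes "X \<subseteq> FG k" "u \<in> gen_sub X"
  shows "\<exists>ws. set ws \<subseteq> X \<union> winv ` X \<and> u = reduce (concat ws)"
  using assms(2)
proof (induction rule: gen_sub.induct)
  case one then show ?case by (intro exI[of _ "[]"]) simp
next
  case (gen s)
  have "reduce s = s" using gen assms(1) by (auto simp: FG_def intro: reduce_id)
  then show ?case using gen by (intro exI[of _ "[s]"]) auto
next
  case (mul u v)
  then obtain ws vs where "set ws \<subseteq> X \<union> winv ` X" "u = reduce (concat ws)"
     "set vs \<subseteq> X \<union> winv ` X" "v = reduce (concat vs)" by blast
  then show ?case
    by (intro exI[of _ "ws @ vs"]) (simp add: fmul_red reduce_append_both[of "concat ws" "concat vs", symmetric])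
next
  case (inv u)
  then obtain ws where ws: "set ws \<subseteq> X \<union> winv ` X" "u = reduce (concat ws)" by blast
  have "winv (concat ws) = concat (rev (map winv ws))"
    by (induction ws) (simp_all add: winv_append)
  moreover have "set (rev (map winv ws)) \<subseteq> X \<union> winv ` X"
    using ws(1) by (force simp: image_iff)
  ultimately show ?case using ws
    by (intro exI[of _ "rev (map winv ws)"]) (simp add: reduce_winv[symmetric])
qed

definition phi :: "letter \<Rightarrow> letter" where "phi l = (fst l mod 2, snd l)"

lemma phi_inv: "phi (inv_letter l) = inv_letter (phi l)"
  by (simp add: phi_def inv_letter_def)

lemma map_phi_winv: "map phi (winv u) = winv (map phi u)"
  by (simp add: winv_def rev_map phi_inv)

lemma inv_phi_eq: "m = inv_letter l \<Longrightarrow> phi m = inv_letter (phi l)"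
  by (simp add: phi_inv)

lemma reduce_map_rstep:
  "reduce (map phi (rstep l x)) = rstep (phi l) (reduce (map phi x))"
proof (cases x)
  case Nil then show ?thesis by (simp add: rstep_def reduce_Cons)
next
  case (Cons m x')
  show ?thesis
  proof (cases "m = inv_letter l")
    case True
    have "rstep (phi l) (reduce (map phi x)) = rstep (phi l) (rstep (inv_letter (phi l)) (reduce (map phi x')))"
      using Cons True by (simp add: reduce_Cons phi_inv)
    also have "\<dots> = reduce (map phi x')" by (rule rstep_cancel[OF reduced_reduce])
    finally show ?thesis using Cons True by (simp add: rstep_def)
  next
    case False then show ?thesis using Cons by (simp add: rstep_def reduce_Cons)
  qed
qed

lemma psi_reduce: "reduce (map phi (reduce w)) = reduce (map phi w)"
  by (induction w) (simp_all add: reduce_Cons reduce_map_rstep)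

lemma psi_ncl4:
  assumes R: "\<forall>r\<in>R. reduce (map phi r) = []" and u: "u \<in> ncl4 R"
  shows "reduce (map phi u) = []"
  using u
proof (induction rule: ncl4.induct)
  case one then show ?case by simp
next
  case (rel r) then show ?case using R by blast
next
  case (mul u v)
  have "reduce (map phi (fmul u v)) = reduce (map phi u @ map phi v)"
    by (simp add: fmul_red psi_reduce)
  also have "\<dots> = reduce (reduce (map phi u) @ reduce (map phi v))" by (rule reduce_append_both)
  finally show ?case using mul by simp
next
  case (inv u)
  have "reduce (map phi (winv u)) = winv (reduce (map phi u))"
    by (simp add: map_phi_winv reduce_winv)
  then show ?case using inv by simp
next
  case (conj u g)
  let ?g = "map phi g" and ?u = "map phi u"
  have "reduce (map phi (fmul (fmul g u) (winv g))) = reduce (map phi (reduce (g @ u) @ winv g))"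
    by (simp add: fmul_red psi_reduce)
  also have "\<dots> = reduce (map phi (reduce (reduce (g @ u) @ winv g)))" by (simp only: psi_reduce)
  also have "\<dots> = reduce (map phi (reduce (g @ u @ winv g)))" by (simp only: reduce_assoc3)
  also have "\<dots> = reduce (?g @ ?u @ winv ?g)" by (simp add: psi_reduce map_phi_winv)
  also have "\<dots> = reduce (?g @ reduce (?u @ winv ?g))" by (rule reduce_append_right)
  also have "\<dots> = reduce (?g @ reduce (reduce ?u @ winv ?g))" by (simp only: reduce_append_left[of ?u])
  also have "\<dots> = reduce (?g @ winv ?g)" using conj by (simp add: reduce_append_right[symmetric])
  also have "\<dots> = []" by (rule reduce_self_winv)
  finally show ?case .
qed


lemma reduce_prefix:
  "reduce w = p @ s \<Longrightarrow> \<exists>q t. w = q @ t \<and> reduce q = p"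
proof (induction w arbitrary: p s)
  case Nil then show ?case by simp
next
  case (Cons l w)
  show ?case
  proof (cases "p = []")
    case True then show ?thesis by (intro exI[of _ "[]"] exI[of _ "l # w"]) auto
  next
    case pne: False
    show ?thesis
    proof (cases "reduce w")
      case Nil
      then have "p = [l]" using Cons.prems pne by (cases p) (auto simp: reduce_Cons rstep_def)
      then show ?thesis using Nil by (intro exI[of _ "l # w"] exI[of _ "[]"]) (auto simp: reduce_Cons rstep_def)
    next
      case Cons2: (Cons m v)
      show ?thesis
      proof (cases "m = inv_letter l")
        case True
        then have "v = p @ s" using Cons.prems Cons2 by (simp add: reduce_Cons rstep_def)
        then have "reduce w = (m # p) @ s" using Cons2 by simp
        from Cons.IH[OF this] obtain q t where "w = q @ t" "reduce q = m # p" by blast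
        then show ?thesis using True
          by (intro exI[of _ "l # q"] exI[of _ t]) (simp add: reduce_Cons rstep_def)
      next
        case False
        then have eq: "l # m # v = p @ s" using Cons.prems Cons2 by (simp add: reduce_Cons rstep_def)
        then obtain p' where p': "p = l # p'" "m # v = p' @ s" using pne by (cases p) auto
        then have "reduce w = p' @ s" using Cons2 by simp
        from Cons.IH[OF this] obtain q t where qt: "w = q @ t" "reduce q = p'" by blast
        have "rstep l p' = l # p'"
          using p'(2) False by (cases p') (auto simp: rstep_def)
        then show ?thesis using qt p'
          by (intro exI[of _ "l # q"] exI[of _ t]) (simp add: reduce_Cons)
      qed
    qed
  qed
qed

lemma concat_prefix:
  "concat ws = q @ t \<Longrightarrow> \<exists>j t'. q = concat (take j ws) @ t' \<and> (t' = [] \<or> (\<exists>w\<in>set ws. length t' \<le> length w))"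
proof (induction ws arbitrary: q)
  case Nil then show ?case by (intro exI[of _ 0] exI[of _ "[]"]) simp
next
  case (Cons w ws)
  then have "w @ concat ws = q @ t" by simp
  then obtain us where us: "(w = q @ us \<and> us @ concat ws = t) \<or> (w @ us = q \<and> concat ws = us @ t)"
    by (auto simp: append_eq_append_conv2)
  then show ?case
  proof
    assume a: "w = q @ us \<and> us @ concat ws = t"
    then show ?thesis by (intro exI[of _ 0] exI[of _ q]) auto
  next
    assume a: "w @ us = q \<and> concat ws = us @ t"
    from Cons.IH[of us] a obtain j t' where "us = concat (take j ws) @ t'"
      "t' = [] \<or> (\<exists>w\<in>set ws. length t' \<le> length w)" by blast
    then show ?thesis using a by (intro exI[of _ "Suc j"] exI[of _ t']) auto
  qed
qed

lemma reduce_concat_cong: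
  "(\<And>x. x \<in> set xs \<Longrightarrow> reduce (f x) = reduce (g x)) \<Longrightarrow>
    reduce (concat (map f xs)) = reduce (concat (map g xs))"
proof (induction xs)
  case (Cons x xs)
  have "reduce (concat (map f (x # xs))) = reduce (reduce (f x) @ reduce (concat (map f xs)))"
    by (simp add: reduce_append_both[of "f x"])
  also have "\<dots> = reduce (reduce (g x) @ reduce (concat (map g xs)))" using Cons by simp
  also have "\<dots> = reduce (concat (map g (x # xs)))"
    by (simp add: reduce_append_both[of "g x" "concat (map g xs)", symmetric])
  finally show ?case .
qed simp

lemma telescope:
  "reduce (concat (map (\<lambda>i. winv (H i) @ H (Suc i)) [0..<n])) = reduce (winv (H 0) @ H n)"
proof (induction n)
  case 0 then show ?case by (simp add: reduce_winv_self)
next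
  case (Suc n)
  let ?C = "concat (map (\<lambda>i. winv (H i) @ H (Suc i)) [0..<n])"
  have "reduce (concat (map (\<lambda>i. winv (H i) @ H (Suc i)) [0..<Suc n]))
      = reduce (?C @ winv (H n) @ H (Suc n))" by simp
  also have "\<dots> = reduce (reduce ?C @ winv (H n) @ H (Suc n))" by (rule reduce_append_left)
  also have "\<dots> = reduce (reduce (winv (H 0) @ H n) @ winv (H n) @ H (Suc n))" using Suc by simp
  also have "\<dots> = reduce (winv (H 0) @ H n @ winv (H n) @ H (Suc n))"
    by (simp add: reduce_append_left[symmetric])
  also have "\<dots> = reduce (winv (H 0) @ reduce (H n @ winv (H n) @ H (Suc n)))"
    by (rule reduce_append_right)
  also have "reduce (H n @ winv (H n) @ H (Suc n)) = reduce (H (Suc n))"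
    by (simp add: reduce_assoc3 reduce_self_winv)
  also have "reduce (winv (H 0) @ reduce (H (Suc n))) = reduce (winv (H 0) @ H (Suc n))"
    by (rule reduce_append_right[symmetric])
  finally show ?case .
qed


lemma wlS_exists:
  assumes "X \<subseteq> FG k" "u \<in> gen_sub X"
  shows "\<exists>ws. length ws = wlS X u \<and> set ws \<subseteq> X \<union> winv ` X \<and> foldr fmul ws [] = u"
proof -
  from gen_sub_concat[OF assms] obtain ws where "set ws \<subseteq> X \<union> winv ` X" "u = reduce (concat ws)"
    by blast
  then have "\<exists>n ws. length ws = n \<and> set ws \<subseteq> X \<union> winv ` X \<and> foldr fmul ws [] = u"
    by (auto simp: foldr_fmul)
  then show ?thesis unfolding wlS_def by (rule LeastI_ex)
qed

lemma wlS_le: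
  "set ws \<subseteq> X \<union> winv ` X \<Longrightarrow> foldr fmul ws [] = u \<Longrightarrow> wlS X u \<le> length ws"
  unfolding wlS_def by (rule Least_le) blast

lemma length_concat_le: "(\<forall>w\<in>set ws. length w \<le> A) \<Longrightarrow> length (concat ws) \<le> A * length ws"
  by (induction ws) auto

lemma len_le_wlS:
  assumes "finite X" "X \<subseteq> FG k" "u \<in> gen_sub X"
  shows "length u \<le> Max (insert 0 (length ` (X \<union> winv ` X))) * wlS X u"
proof -
  let ?A = "Max (insert 0 (length ` (X \<union> winv ` X)))"
  obtain ws where ws: "length ws = wlS X u" "set ws \<subseteq> X \<union> winv ` X" "foldr fmul ws [] = u"
    using wlS_exists[OF assms(2,3)] by blast
  have "\<forall>w\<in>set ws. length w \<le> ?A" using ws(2) assms(1) by (auto intro!: Max_ge)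
  then have "length (concat ws) \<le> ?A * length ws" by (rule length_concat_le)
  moreover have "length u \<le> length (concat ws)" using ws(3) length_reduce[of "concat ws"] by (simp add: foldr_fmul)
  ultimately show ?thesis using ws(1) by simp
qed

lemma close_to_sub:
  assumes X: "X \<subseteq> FG k" and ku: "u \<in> gen_sub X" and i: "i \<le> length u" and fin: "finite X"
  shows "\<exists>h\<in>gen_sub X. length (fmul (winv h) (take i u)) \<le> Max (insert 0 (length ` (X \<union> winv ` X)))"
proof -
  obtain ws where ws: "set ws \<subseteq> X \<union> winv ` X" "u = reduce (concat ws)"
    using gen_sub_concat[OF X ku] by blast
  have "reduce (concat ws) = take i u @ drop i u" using ws by simp
  from reduce_prefix[OF this] obtain q t where qt: "concat ws = q @ t" "reduce q = take i u" by blast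
  from concat_prefix[OF qt(1)] obtain j t' where jt: "q = concat (take j ws) @ t'"
     "t' = [] \<or> (\<exists>w\<in>set ws. length t' \<le> length w)" by blast
  let ?h = "reduce (concat (take j ws))"
  have hin: "?h \<in> gen_sub X"
    using ws(1) by (intro concat_in_gen_sub) (meson order_trans set_take_subset)
  have "fmul (winv ?h) (take i u) = reduce (winv ?h @ reduce (concat (take j ws) @ t'))"
    using qt(2) jt(1) by (simp add: fmul_red)
  also have "\<dots> = reduce (winv ?h @ reduce (?h @ t'))"
    by (simp only: reduce_append_left[of "concat (take j ws)" t'])
  also have "\<dots> = reduce (winv ?h @ ?h @ t')" by (rule reduce_append_right[symmetric])
  also have "\<dots> = reduce t'" by (simp add: reduce_assoc3 reduce_winv_self)
  finally have eq: "fmul (winv ?h) (take i u) = reduce t'" .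
  have "length t' \<le> Max (insert 0 (length ` (X \<union> winv ` X)))"
    using jt(2)
  proof
    assume "\<exists>w\<in>set ws. length t' \<le> length w"
    then obtain w where "w \<in> set ws" "length t' \<le> length w" by blast
    moreover have "finite (X \<union> winv ` X)" using fin by simp
    ultimately have "length w \<le> Max (insert 0 (length ` (X \<union> winv ` X)))"
      using ws(1) by (intro Max_ge) auto
    then show ?thesis using \<open>length t' \<le> length w\<close> by linarith
  qed simp
  then show ?thesis using hin eq length_reduce[of t'] by (metis order_trans)
qed


lemma reduce_mid: "reduce (reduce a @ c @ reduce e) = reduce (a @ c @ e)"
  by (metis append.assoc reduce_append_left reduce_append_right)

lemma concat_concat_map: "concat (concat (map f xs)) = concat (map (\<lambda>x. concat (f x)) xs)"
  by (induction xs) auto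

lemma quasiconvex:
  assumes fin: "finite X" and X: "X \<subseteq> FG 2"
  shows "\<exists>M. \<forall>u\<in>gen_sub X. wlS X u \<le> M * length u"
proof -
  let ?T = "X \<union> winv ` X"
  let ?R = "Max (insert 0 (length ` ?T))"
  define B where "B = {u \<in> gen_sub X. length u \<le> 2 * ?R + 1}"
  have GF: "gen_sub X \<subseteq> FG 2" by (rule gen_sub_FG[OF X])
  have "B \<subseteq> {xs. set xs \<subseteq> {0::nat,1} \<times> (UNIV::bool set) \<and> length xs \<le> 2 * ?R + 1}"
  proof
    fix u assume "u \<in> B"
    then have "u \<in> FG 2" "length u \<le> 2 * ?R + 1" using GF B_def by auto
    then show "u \<in> {xs. set xs \<subseteq> {0::nat,1} \<times> (UNIV::bool set) \<and> length xs \<le> 2 * ?R + 1}"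
      by (auto simp: FG_def)
  qed
  moreover have "finite {xs. set xs \<subseteq> {0::nat,1} \<times> (UNIV::bool set) \<and> length xs \<le> 2 * ?R + 1}"
    by (rule finite_lists_length_le) simp
  ultimately have finB: "finite B" by (rule finite_subset)
  define M where "M = Max (insert 0 (wlS X ` B))"
  define W where "W v = (SOME ws. length ws = wlS X v \<and> set ws \<subseteq> ?T \<and> foldr fmul ws [] = v)" for v
  have W: "length (W v) = wlS X v \<and> set (W v) \<subseteq> ?T \<and> foldr fmul (W v) [] = v" if "v \<in> gen_sub X" for v
    unfolding W_def by (rule someI_ex) (rule wlS_exists[OF X that])
  show ?thesis
  proof (intro exI[of _ M] ballI)
    fix u assume u: "u \<in> gen_sub X"
    define n where "n = length u"
    have ured: "reduce u = u" using u GF by (auto simp: FG_def intro: reduce_id)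
    have "\<forall>i. \<exists>h. i \<le> n \<longrightarrow> h \<in> gen_sub X \<and> length (fmul (winv h) (take i u)) \<le> ?R"
      using close_to_sub[OF X u _ fin] n_def by blast
    then obtain H0 where H0: "\<forall>i. i \<le> n \<longrightarrow> H0 i \<in> gen_sub X \<and> length (fmul (winv (H0 i)) (take i u)) \<le> ?R"
      by (metis choice)
    define H where "H i = (if i = 0 then [] else if i = n then u else H0 i)" for i
    have H: "H i \<in> gen_sub X \<and> length (fmul (winv (H i)) (take i u)) \<le> ?R" if "i \<le> n" for i
    proof (cases "i = 0")
      case True then show ?thesis by (simp add: H_def fmul_red gen_sub.one)
    next
      case False
      show ?thesis
      proof (cases "i = n")
        case True then show ?thesis using False u n_def
          by (simp add: H_def fmul_red reduce_winv_self)
      next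
        case F2: False then show ?thesis using False H0 that by (simp add: H_def)
      qed
    qed
    define D where "D i = fmul (winv (H i)) (H (Suc i))" for i
    have DB: "D i \<in> B" if i: "i < n" for i
    proof -
      have Hi: "H i \<in> gen_sub X" "H (Suc i) \<in> gen_sub X" using H i by auto
      have Din: "D i \<in> gen_sub X" using Hi by (simp add: D_def gen_sub.mul gen_sub.inv)
      let ?p = "take i u" and ?p' = "take (Suc i) u" and ?x = "u ! i"
      let ?a = "fmul (winv (H i)) ?p" and ?b = "fmul (winv (H (Suc i))) ?p'"
      have pp: "?p' = ?p @ [?x]" using i n_def by (simp add: take_Suc_conv_app_nth)
      have wb: "winv (reduce (winv (H (Suc i)) @ ?p')) = reduce (winv ?p' @ H (Suc i))"
        by (simp add: fmul_red reduce_winv[symmetric] winv_append)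
      have "reduce (?a @ [?x] @ winv ?b)
          = reduce (reduce (winv (H i) @ ?p) @ [?x] @ reduce (winv ?p' @ H (Suc i)))"
        by (simp only: wb fmul_red)
      also have "\<dots> = reduce ((winv (H i) @ ?p) @ [?x] @ (winv ?p' @ H (Suc i)))"
        by (rule reduce_mid)
      also have "\<dots> = reduce (winv (H i) @ (?p' @ winv ?p' @ H (Suc i)))"
        by (simp add: pp)
      also have "\<dots> = reduce (winv (H i) @ reduce (?p' @ winv ?p' @ H (Suc i)))"
        by (rule reduce_append_right)
      also have "reduce (?p' @ winv ?p' @ H (Suc i)) = reduce (H (Suc i))"
        by (simp add: reduce_assoc3 reduce_self_winv)
      also have "reduce (winv (H i) @ reduce (H (Suc i))) = D i"
        by (simp add: D_def fmul_red reduce_append_right[of "winv (H i)" "H (Suc i)", symmetric])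
      finally have "D i = reduce (?a @ [?x] @ winv ?b)" by simp
      then have "length (D i) \<le> length ?a + 1 + length ?b"
        using length_reduce[of "?a @ [?x] @ winv ?b"] by simp
      moreover have "length ?a \<le> ?R" "length ?b \<le> ?R" using H i by auto
      ultimately have "length (D i) \<le> 2 * ?R + 1" by linarith
      then show ?thesis using Din B_def by simp
    qed
    define wsa where "wsa = concat (map (\<lambda>i. W (D i)) [0..<n])"
    have DX: "D i \<in> gen_sub X" if "i < n" for i using DB[OF that] B_def by simp
    have set_wsa: "set wsa \<subseteq> ?T"
    proof
      fix x assume "x \<in> set wsa"
      then obtain i where "i < n" "x \<in> set (W (D i))" by (auto simp: wsa_def)
      then show "x \<in> ?T" using W[OF DX] by blast
    qed
    have "\<forall>w\<in>set (map (\<lambda>i. W (D i)) [0..<n]). length w \<le> M"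
    proof
      fix w assume "w \<in> set (map (\<lambda>i. W (D i)) [0..<n])"
      then obtain i where i: "i < n" "w = W (D i)" by auto
      then have "length w = wlS X (D i)" using W DX by simp
      also have "\<dots> \<le> M" unfolding M_def using finB DB[OF i(1)] by (intro Max_ge) auto
      finally show "length w \<le> M" .
    qed
    then have len: "length wsa \<le> M * n"
      using length_concat_le[of "map (\<lambda>i. W (D i)) [0..<n]" M] by (simp add: wsa_def)
    have "foldr fmul wsa [] = reduce (concat (map (\<lambda>i. concat (W (D i))) [0..<n]))"
      by (simp add: foldr_fmul wsa_def concat_concat_map)
    also have "\<dots> = reduce (concat (map (\<lambda>i. winv (H i) @ H (Suc i)) [0..<n]))"
    proof (rule reduce_concat_cong)
      fix i assume "i \<in> set [0..<n]"
      then have "i < n" by simp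
      then have "reduce (concat (W (D i))) = D i" using W[OF DX] by (simp add: foldr_fmul)
      then show "reduce (concat (W (D i))) = reduce (winv (H i) @ H (Suc i))"
        by (simp add: D_def fmul_red)
    qed
    also have "\<dots> = reduce (winv (H 0) @ H n)" by (rule telescope)
    also have "\<dots> = u" using ured n_def by (simp add: H_def)
    finally have "wlS X u \<le> length wsa" using set_wsa by (intro wlS_le) auto
    then show "wlS X u \<le> M * length u" using len n_def by simp
  qed
qed


lemma phi_id: "\<forall>l\<in>set w. fst l < 2 \<Longrightarrow> map phi w = w"
  by (induction w) (auto simp: phi_def)

lemma phi_to_xy: "\<forall>l\<in>set w. fst l < 2 \<Longrightarrow> map phi (to_xy w) = w"
  by (induction w) (auto simp: phi_def to_xy_def)

lemma F2_reduce: "w \<in> F2 \<Longrightarrow> reduce w = w"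
  by (simp add: FG_def reduce_id)

lemma wlG_exists:
  assumes "w \<in> F2"
  shows "\<exists>v. length v = wlG g w \<and> (\<forall>l\<in>set v. fst l < 4) \<and> fmul (winv w) (reduce v) \<in> amalg_rel g"
proof -
  have "\<exists>n v. length v = n \<and> (\<forall>l\<in>set v. fst l < 4) \<and> fmul (winv w) (reduce v) \<in> amalg_rel g"
    using assms by (intro exI[of _ "length w"] exI[of _ w])
      (auto simp: FG_def F2_reduce fmul_red reduce_winv_self amalg_rel_def intro: ncl4.one)
  then show ?thesis unfolding wlG_def by (rule LeastI_ex)
qed

lemma wlG_le: "w \<in> F2 \<Longrightarrow> wlG g w \<le> length w"
  unfolding wlG_def
  by (rule Least_le, rule exI[of _ w])
     (auto simp: FG_def F2_reduce fmul_red reduce_winv_self amalg_rel_def intro: ncl4.one)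

lemma wlG_ge:
  assumes K: "Kall g \<subseteq> F2" and w: "w \<in> F2"
  shows "length w \<le> wlG g w"
proof -
  obtain v where v: "length v = wlG g w" "fmul (winv w) (reduce v) \<in> amalg_rel g"
    using wlG_exists[OF w] by blast
  have R: "\<forall>r\<in>(\<lambda>k. fmul k (winv (to_xy k))) ` Kall g. reduce (map phi r) = []"
  proof
    fix r assume "r \<in> (\<lambda>k. fmul k (winv (to_xy k))) ` Kall g"
    then obtain k where k: "k \<in> F2" "r = fmul k (winv (to_xy k))" using K by blast
    have "reduce (map phi r) = reduce (map phi (k @ winv (to_xy k)))"
      using k(2) by (simp add: fmul_red psi_reduce)
    also have "\<dots> = reduce (k @ winv k)"
      using k(1) by (simp add: map_phi_winv phi_id phi_to_xy FG_def)
    finally show "reduce (map phi r) = []" by (simp add: reduce_self_winv)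
  qed
  have wl: "\<forall>l\<in>set w. fst l < 2" "\<forall>l\<in>set (winv w). fst l < 2"
    using w FG_winv[OF w] by (auto simp: FG_def)
  have "[] = reduce (map phi (fmul (winv w) (reduce v)))"
    using psi_ncl4[OF R] v(2) by (simp add: amalg_rel_def)
  also have "\<dots> = reduce (map phi (winv w) @ map phi (reduce v))"
    by (simp add: fmul_red psi_reduce)
  also have "\<dots> = reduce (winv w @ reduce (map phi (reduce v)))"
    using wl(2) by (simp add: phi_id reduce_append_right[of "winv w" "map phi (reduce v)"])
  also have "\<dots> = reduce (winv w @ reduce (map phi v))" by (simp only: psi_reduce)
  finally have e: "reduce (winv w @ reduce (map phi v)) = []" by simp
  have "reduce (map phi v) = reduce (reduce (w @ winv w) @ reduce (map phi v))"
    by (simp add: reduce_self_winv)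
  also have "\<dots> = reduce (w @ reduce (winv w @ reduce (map phi v)))"
    by (metis append.assoc reduce_append_left reduce_append_right)
  also have "\<dots> = w" using e F2_reduce[OF w] by simp
  finally have "w = reduce (map phi v)" by simp
  then have "length w \<le> length (map phi v)" by (metis length_reduce)
  then show ?thesis using v(1) by simp
qed

lemma ultra_conv:
  assumes U: "nonprincipal_ultrafilter F" and ev: "eventually (\<lambda>n. f n \<in> {0..B}) F"
  shows "\<exists>l. (f \<longlongrightarrow> (l::real)) F"
proof -
  let ?G = "filtermap f F"
  have Fnb: "F \<noteq> bot" using U by (simp add: nonprincipal_ultrafilter_def)
  then have "?G \<noteq> bot" by (simp add: filtermap_bot_iff)
  moreover have "eventually (\<lambda>x. x \<in> {0..B}) ?G" using ev by (simp add: eventually_filtermap)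
  ultimately obtain x where x: "inf (nhds x) ?G \<noteq> bot"
    using compact_filter[THEN iffD1, OF compact_Icc, rule_format] by blast
  have "(f \<longlongrightarrow> x) F"
    unfolding tendsto_def
  proof (intro allI impI)
    fix S :: "real set" assume S: "open S" "x \<in> S"
    show "eventually (\<lambda>n. f n \<in> S) F"
    proof (rule ccontr)
      assume "\<not> eventually (\<lambda>n. f n \<in> S) F"
      then have "eventually (\<lambda>n. \<not> f n \<in> S) F" using U by (auto simp: nonprincipal_ultrafilter_def)
      then have a: "eventually (\<lambda>y. y \<notin> S) ?G" by (simp add: eventually_filtermap)
      have b: "eventually (\<lambda>y. y \<in> S) (nhds x)" using S by (rule eventually_nhds_in_open)
      have "eventually (\<lambda>_. False) (inf (nhds x) ?G)"
        unfolding eventually_inf using a b by blast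
      then show False using x by (simp add: eventually_False)
    qed
  qed
  then show ?thesis by blast
qed

theorem proposition6p6:
  fixes g :: "nat \<Rightarrow> word"            (* g_n, n \<ge> 1 *)
    and h :: "nat \<Rightarrow> word"            (* h_{n+1} = h (n+1) *)
    and r :: "nat \<Rightarrow> nat \<Rightarrow> letter"  (* r n : the ray used at step n *)
    and c e :: "nat \<Rightarrow> letter"        (* c_{n+1}, d_{n+1} *)
    and N :: "nat \<Rightarrow> nat"
    and S :: "word set"                 (* finite generating set of K_2 *)
    and F :: "nat filter"
    and d :: "nat \<Rightarrow> real"
  assumes g_F2: "\<forall>n\<ge>1. g n \<in> F2"
    and g1: "\<not> proper_power (g 1)"
    and no_powers: "\<forall>n\<ge>1. \<forall>m\<ge>1. replicate m gen_a \<notin> Kn g n \<and> replicate m gen_b \<notin> Kn g n"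
    and step: "\<forall>n\<ge>1.
        g (Suc n) \<notin> Kn g n
      \<and> cyc_reduced (g (Suc n))
      \<and> gprod_set (g (Suc n)) (Kn g n)
          = (LEAST m. \<exists>k \<in> F2 - Kn g n. gprod_set k (Kn g n) = m)
      \<and> geod_ray (r n)
      \<and> (\<forall>r'. geod_ray r' \<longrightarrow> ray_gprod_set (r n) (Kn g n) \<le> ray_gprod_set r' (Kn g n))
      \<and> h (Suc n) = ray_prefix (r n) (length (h (Suc n)))
      \<and> enat (gprod_set (h (Suc n)) (Kn g n)) = ray_gprod_set (r n) (Kn g n)
      \<and> length (h (Suc n)) = gprod_set (h (Suc n)) (Kn g n) + 1
      \<and> (\<forall>w \<in> Kn g n. \<forall>m. has_power_subword gen_a m w \<or> has_power_subword gen_b m w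
            \<longrightarrow> 2 * m \<le> N n)
      \<and> N n > length (h (Suc n))
      \<and> fst (c (Suc n)) < 2 \<and> fst (e (Suc n)) < 2
      \<and> cyc_reduced (h (Suc n) @ [c (Suc n)] @ Uword (N n) @ [e (Suc n)])
      \<and> g (Suc n) = h (Suc n) @ [c (Suc n)] @ Uword (N n) @ [e (Suc n)]"
    and S_fin: "finite S"
    and S_sub: "S \<subseteq> Kn g 2"
    and S_gen: "gen_sub S = Kn g 2"
    and ultra: "nonprincipal_ultrafilter F"
    and d_pos: "\<forall>n. d n > 0"
    and d_inf: "filterlim d at_top F"
  shows "\<exists>L>0. \<forall>x y. (\<forall>n. x n \<in> Kn g 2) \<longrightarrow> (\<forall>n. y n \<in> Kn g 2)
           \<longrightarrow> cone_admissible F d (\<lambda>n. real (wlS S (x n)))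
           \<longrightarrow> cone_admissible F d (\<lambda>n. real (wlS S (y n)))
           \<longrightarrow> cone_admissible F d (\<lambda>n. real (wlG g (x n)))
             \<and> ulim F (\<lambda>n. real (distG g (x n) (y n)) / d n)
                 \<le> L * ulim F (\<lambda>n. real (distS S (x n) (y n)) / d n)
             \<and> ulim F (\<lambda>n. real (distS S (x n) (y n)) / d n)
                 \<le> L * ulim F (\<lambda>n. real (distG g (x n) (y n)) / d n)"
proof -
  have gF: "g ` {1..n} \<subseteq> F2" for n using g_F2 by auto
  have KnF: "Kn g n \<subseteq> F2" for n unfolding Kn_def by (rule gen_sub_FG[OF gF])
  have KF: "Kall g \<subseteq> F2" using KnF by (auto simp: Kall_def)
  have SF: "S \<subseteq> F2" using S_sub KnF by blast
  obtain Mq where Mq: "\<forall>u\<in>gen_sub S. wlS S u \<le> Mq * length u"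
    using quasiconvex[OF S_fin SF] by blast
  define A where "A = Max (insert 0 (length ` (S \<union> winv ` S)))"
  have lenA: "length u \<le> A * wlS S u" if "u \<in> Kn g 2" for u
    using len_le_wlS[OF S_fin SF, of u] that S_gen A_def by simp
  have wlSM: "wlS S u \<le> Mq * length u" if "u \<in> Kn g 2" for u using Mq that S_gen by simp
  have wlGeq: "wlG g u = length u" if "u \<in> Kn g 2" for u
    using wlG_le[of u g] wlG_ge[OF KF, of u] that KnF by force
  define L where "L = real (max 1 (max A Mq))"
  have L1: "L \<ge> 1" "real A \<le> L" "real Mq \<le> L" by (auto simp: L_def)
  have Fnb: "F \<noteq> bot" using ultra by (simp add: nonprincipal_ultrafilter_def)
  have Kmul: "fmul (winv u) v \<in> Kn g 2" if "u \<in> Kn g 2" "v \<in> Kn g 2" for u v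
    using that S_gen by (metis gen_sub.inv gen_sub.mul)
  show ?thesis
  proof (intro exI[of _ L] conjI allI impI)
    show "L > 0" using L1 by simp
  next
    fix x y :: "nat \<Rightarrow> word"
    assume x: "\<forall>n. x n \<in> Kn g 2" and y: "\<forall>n. y n \<in> Kn g 2"
      and ax: "cone_admissible F d (\<lambda>n. real (wlS S (x n)))"
      and ay: "cone_admissible F d (\<lambda>n. real (wlS S (y n)))"
    obtain C1 where C1: "eventually (\<lambda>n. real (wlS S (x n)) \<le> C1 * d n) F"
      using ax by (auto simp: cone_admissible_def)
    obtain C2 where C2: "eventually (\<lambda>n. real (wlS S (y n)) \<le> C2 * d n) F"
      using ay by (auto simp: cone_admissible_def)
    define u where "u n = fmul (winv (x n)) (y n)" for n
    have u: "u n \<in> Kn g 2" for n using Kmul x y by (simp add: u_def)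
    have dG: "distG g (x n) (y n) = length (u n)" for n
      using wlGeq[OF u] by (simp add: distG_def u_def)
    have dS: "distS S (x n) (y n) = wlS S (u n)" for n by (simp add: distS_def u_def)
    show "cone_admissible F d (\<lambda>n. real (wlG g (x n)))"
      unfolding cone_admissible_def
    proof (intro exI[of _ "A * C1"])
      show "eventually (\<lambda>n. real (wlG g (x n)) \<le> A * C1 * d n) F"
        using C1
      proof eventually_elim
        case (elim n)
        have "real (wlG g (x n)) = real (length (x n))" using wlGeq x by simp
        also have "\<dots> \<le> real A * real (wlS S (x n))" using lenA[of "x n"] x
          by (metis of_nat_le_iff of_nat_mult)
        also have "\<dots> \<le> real A * (C1 * d n)" using elim by (intro mult_left_mono) auto
        finally show ?case by simp
      qed
    qed
    define fG where "fG = (\<lambda>n. real (distG g (x n) (y n)) / d n)"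
    define fS where "fS = (\<lambda>n. real (distS S (x n) (y n)) / d n)"
    have ptw1: "fG n \<le> L * fS n" for n
    proof -
      have "real (length (u n)) \<le> real A * real (wlS S (u n))"
        using lenA[OF u] by (metis of_nat_le_iff of_nat_mult)
      also have "\<dots> \<le> L * real (wlS S (u n))" using L1 by (intro mult_right_mono) auto
      finally have "real (length (u n)) \<le> L * real (wlS S (u n))" .
      then have "real (length (u n)) / d n \<le> L * real (wlS S (u n)) / d n"
        using d_pos[rule_format, of n] by (intro divide_right_mono) auto
      then show ?thesis by (simp add: fG_def fS_def dG dS)
    qed
    have ptw2: "fS n \<le> L * fG n" for n
    proof -
      have "real (wlS S (u n)) \<le> real Mq * real (length (u n))"
        using wlSM[OF u] by (metis of_nat_le_iff of_nat_mult)
      also have "\<dots> \<le> L * real (length (u n))" using L1 by (intro mult_right_mono) auto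
      finally have "real (wlS S (u n)) \<le> L * real (length (u n))" .
      then have "real (wlS S (u n)) / d n \<le> L * real (length (u n)) / d n"
        using d_pos[rule_format, of n] by (intro divide_right_mono) auto
      then show ?thesis by (simp add: fG_def fS_def dG dS)
    qed
    define B where "B = real Mq * real A * (C1 + C2)"
    have bndS: "eventually (\<lambda>n. fS n \<in> {0..B}) F"
      using C1 C2
    proof eventually_elim
      case (elim n)
      have "length (u n) \<le> length (x n) + length (y n)"
        using length_reduce[of "winv (x n) @ y n"] by (simp add: u_def fmul_red)
      then have "real (length (u n)) \<le> real A * real (wlS S (x n)) + real A * real (wlS S (y n))"
        using lenA[of "x n"] lenA[of "y n"] x y
        by (metis (no_types, opaque_lifting) add_mono of_nat_add of_nat_le_iff of_nat_mult order_trans)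
      also have "\<dots> \<le> real A * (C1 * d n) + real A * (C2 * d n)"
        using elim by (intro add_mono mult_left_mono) auto
      finally have l: "real (length (u n)) \<le> real A * (C1 + C2) * d n" by (simp add: algebra_simps)
      have "real (wlS S (u n)) \<le> real Mq * real (length (u n))"
        using wlSM[OF u] by (metis of_nat_le_iff of_nat_mult)
      also have "\<dots> \<le> real Mq * (real A * (C1 + C2) * d n)" using l by (intro mult_left_mono) auto
      finally have "real (wlS S (u n)) \<le> B * d n" by (simp add: B_def algebra_simps)
      then show ?case using d_pos[rule_format, of n]
        by (simp add: fS_def dS pos_divide_le_eq)
    qed
    have bndG: "eventually (\<lambda>n. fG n \<in> {0..L * B}) F"
      using bndS
    proof eventually_elim
      case (elim n)
      have "fG n \<le> L * fS n" by (rule ptw1)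
      also have "\<dots> \<le> L * B" using elim L1 by (intro mult_left_mono) auto
      finally show ?case using d_pos[rule_format, of n] by (simp add: fG_def)
    qed
    obtain lS where lS: "(fS \<longlongrightarrow> lS) F" using ultra_conv[OF ultra bndS] by blast
    obtain lG where lG: "(fG \<longlongrightarrow> lG) F" using ultra_conv[OF ultra bndG] by blast
    have eS: "ulim F fS = lS" unfolding ulim_def by (rule tendsto_Lim) (use Fnb lS in auto)
    have eG: "ulim F fG = lG" unfolding ulim_def by (rule tendsto_Lim) (use Fnb lG in auto)
    have "lG \<le> L * lS"
      by (rule tendsto_le[OF Fnb tendsto_mult_left[OF lS] lG]) (simp add: ptw1)
    then show "ulim F (\<lambda>n. real (distG g (x n) (y n)) / d n)
                 \<le> L * ulim F (\<lambda>n. real (distS S (x n) (y n)) / d n)"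
      using eS eG by (simp add: fG_def fS_def)
    have "lS \<le> L * lG"
      by (rule tendsto_le[OF Fnb tendsto_mult_left[OF lG] lS]) (simp add: ptw2)
    then show "ulim F (\<lambda>n. real (distS S (x n) (y n)) / d n)
                 \<le> L * ulim F (\<lambda>n. real (distG g (x n) (y n)) / d n)"
      using eS eG by (simp add: fG_def fS_def)
  qed
qed

end
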